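(* Let $\beta_0,n,\delta,\gamma,r>0$, $k=2e^{-\gamma r}$, and assume $\frac{\beta_0}{\delta}(k-1)=1$. Consider $$\dot{x}(t)=-\Big[\frac{\beta_0}{1+x(t)^n}+\delta\Big]x(t)+k\,\frac{\beta_0\,x(t-r)}{1+x(t-r)^n}$$ with initial data $x=\phi$ on $[-r,0]$. Then the equilibrium $x_1=0$ is stable in the following sense: for every $\varepsilon>0$ there exists $\eta>0$ such that for every continuous $\phi:[-r,0]\to[0,\infty)$ with $\sup_{s\in[-r,0]}|\phi(s)|<\eta$, the solution satisfies $0\le x(t,\phi)<\varepsilon$ for all $t>0$.
   Context: $x(t,\phi)$ denotes the (unique, global, nonnegative) solution with initial function $\phi$. *)

theory Defs
  imports Complex_Main
begin

definition dde_solution ::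
  "real \<Rightarrow> real \<Rightarrow> real \<Rightarrow> real \<Rightarrow> real \<Rightarrow> (real \<Rightarrow> real) \<Rightarrow> (real \<Rightarrow> real) \<Rightarrow> bool" where
  "dde_solution b0 n d k r phi x \<longleftrightarrow>
     continuous_on {-r..} x \<and>
     (\<forall>s\<in>{-r..0}. x s = phi s) \<and>
     (\<forall>t\<ge>-r. 0 \<le> x t) \<and>
     (\<forall>t>0. (x has_real_derivative
          (-(b0 / (1 + x t powr n) + d) * x t
           + k * (b0 * x (t - r) / (1 + x (t - r) powr n)))) (at t))"

end

theory Submission
  imports Defs "HOL-Analysis.Analysis"
begin

theorem mainTheorem4:
  fixes b0 n d g r k :: real
  assumes "b0 > 0" and "n > 0" and "d > 0" and "g > 0" and "r > 0"
    and "k = 2 * exp (- g * r)"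
    and "b0 / d * (k - 1) = 1"
  shows "\<forall>\<epsilon>>0. \<exists>\<eta>>0. \<forall>phi x.
           continuous_on {-r..0} phi \<and> (\<forall>s\<in>{-r..0}. 0 \<le> phi s) \<and>
           (SUP s\<in>{-r..0}. \<bar>phi s\<bar>) < \<eta> \<and>
           dde_solution b0 n d k r phi x
           \<longrightarrow> (\<forall>t>0. 0 \<le> x t \<and> x t < \<epsilon>)"
proof (intro allI impI)
  fix \<epsilon> :: real assume ep: "\<epsilon> > 0"
  have kpos: "k > 0" using assms(6) by simp
  have kb: "(k - 1) * b0 = d" using assms(7) assms(3) by (simp add: field_simps)
  define C where "C = 1 + k * b0 * r"
  have Cpos: "C > 0" unfolding C_def using kpos assms(1,5) by (simp add: add_pos_nonneg)
  show "\<exists>\<eta>>0. \<forall>phi x.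
           continuous_on {-r..0} phi \<and> (\<forall>s\<in>{-r..0}. 0 \<le> phi s) \<and>
           (SUP s\<in>{-r..0}. \<bar>phi s\<bar>) < \<eta> \<and>
           dde_solution b0 n d k r phi x
           \<longrightarrow> (\<forall>t>0. 0 \<le> x t \<and> x t < \<epsilon>)"
  proof (intro exI[of _ "\<epsilon> / C"] conjI allI impI)
    show "\<epsilon> / C > 0" using ep Cpos by simp
    fix phi x :: "real \<Rightarrow> real" and t :: real
    assume H: "continuous_on {-r..0} phi \<and> (\<forall>s\<in>{-r..0}. 0 \<le> phi s) \<and>
           (SUP s\<in>{-r..0}. \<bar>phi s\<bar>) < \<epsilon> / C \<and>
           dde_solution b0 n d k r phi x"
      and t: "t > 0"
    have cphi: "continuous_on {-r..0} phi" and phinn: "\<forall>s\<in>{-r..0}. 0 \<le> phi s"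
      and Sl: "(SUP s\<in>{-r..0}. \<bar>phi s\<bar>) < \<epsilon> / C"
      and sol: "dde_solution b0 n d k r phi x" using H by auto
    define S where "S = (SUP s\<in>{-r..0}. \<bar>phi s\<bar>)"
    have cx: "continuous_on {-r..} x" and xphi: "\<forall>s\<in>{-r..0}. x s = phi s"
      and xnn: "\<forall>t\<ge>-r. 0 \<le> x t"
      and xder: "\<forall>t>0. (x has_real_derivative
          (-(b0 / (1 + x t powr n) + d) * x t
           + k * (b0 * x (t - r) / (1 + x (t - r) powr n)))) (at t)"
      using sol unfolding dde_solution_def by auto
    have bdd: "bdd_above ((\<lambda>s. \<bar>phi s\<bar>) ` {-r..0})"
    proof -
      have "compact ((\<lambda>s. \<bar>phi s\<bar>) ` {-r..0})"
        by (intro compact_continuous_image continuous_intros cphi) auto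
      thus ?thesis by (intro bounded_imp_bdd_above compact_imp_bounded)
    qed
    have phiS: "\<And>s. s \<in> {-r..0} \<Longrightarrow> phi s \<le> S"
    proof -
      fix s :: real assume s: "s \<in> {-r..0}"
      have "\<bar>phi s\<bar> \<le> S" unfolding S_def by (rule cSUP_upper[OF s bdd])
      thus "phi s \<le> S" by simp
    qed
    have S0: "0 \<le> S" proof -
      have "0 \<le> phi 0" "phi 0 \<le> S" using phiS[of 0] phinn assms(5) by auto
      thus ?thesis by linarith
    qed
    define h where "h = (\<lambda>s. b0 * x s / (1 + x s powr n))"
    have hnn: "\<And>s. s \<ge> -r \<Longrightarrow> 0 \<le> h s"
      unfolding h_def using xnn assms(1) by (simp add: add_pos_nonneg)
    have hle: "\<And>s. s \<ge> -r \<Longrightarrow> h s \<le> b0 * x s"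
    proof -
      fix s :: real assume s: "s \<ge> -r"
      have "1 \<le> 1 + x s powr n" by simp
      moreover have "0 \<le> b0 * x s" using xnn s assms(1) by simp
      ultimately show "h s \<le> b0 * x s" unfolding h_def
        using divide_left_mono[of 1 "1 + x s powr n" "b0 * x s"]
        by (simp add: add_pos_nonneg)
    qed
    have ch: "continuous_on {-r..} h"
    proof -
      have cp: "continuous_on {-r..} (\<lambda>s. x s powr n)"
        by (rule continuous_on_powr'[OF cx continuous_on_const]) (use xnn assms(2) in auto)
      have "continuous_on {-r..} (\<lambda>s. b0 * x s / (1 + x s powr n))"
        by (intro continuous_on_divide continuous_on_mult continuous_on_const continuous_on_add cx cp)
          (smt (verit) powr_ge_zero)
      thus ?thesis unfolding h_def .
    qed
    define G where "G = (\<lambda>u. integral {-r..u} h)"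
    have Gder: "\<And>y. y > -r \<Longrightarrow> (G has_real_derivative h y) (at y)"
    proof -
      fix y :: real assume y: "y > -r"
      have "continuous_on {-r..y+1} h" using ch by (rule continuous_on_subset) auto
      then have "(G has_real_derivative h y) (at y within {-r..y+1})"
        unfolding G_def using y by (intro integral_has_real_derivative) auto
      moreover have "y \<in> interior {-r..y+1}" using y by simp
      then have "at y within {-r..y+1} = at y" by (rule at_within_interior)
      ultimately show "(G has_real_derivative h y) (at y)"
        by simp
    qed
    have cG: "\<And>b. continuous_on {-r..b} G"
    proof -
      fix b :: real
      show "continuous_on {-r..b} G"
      proof (cases "-r \<le> b")
        case True
        have chb: "continuous_on {-r..b} h" using ch by (rule continuous_on_subset) auto
        have "\<forall>y\<in>{-r..b}. (G has_real_derivative h y) (at y within {-r..b})"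
          unfolding G_def using integral_has_real_derivative[OF chb] by blast
        then show ?thesis
          using DERIV_continuous continuous_on_eq_continuous_within by blast
      qed auto
    qed
    define V where "V = (\<lambda>u. x u + k * (G u - G (u - r)))"
    have Vder: "\<And>u. u > 0 \<Longrightarrow> \<exists>y. (V has_real_derivative y) (at u) \<and> y \<le> 0"
    proof -
      fix u :: real assume u: "u > 0"
      let ?p = "x u powr n"
      have d1: "(x has_real_derivative
          (-(b0 / (1 + ?p) + d) * x u + k * h (u - r))) (at u)"
        using xder u unfolding h_def by auto
      have d2: "((\<lambda>u. G (u - r)) has_real_derivative h (u - r)) (at u)"
      proof -
        have g1: "(G has_real_derivative h (u - r)) (at (u - r))" using Gder u by simp
        have g2: "((\<lambda>u. u - r) has_real_derivative 1) (at u)"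
          by (auto intro!: derivative_eq_intros)
        show ?thesis using DERIV_chain2[OF g1 g2] by simp
      qed
      have dV: "(V has_real_derivative
          (-(b0 / (1 + ?p) + d) * x u + k * h (u - r) + k * (h u - h (u - r)))) (at u)"
        unfolding V_def
        using DERIV_add[OF d1 DERIV_cmult[OF DERIV_diff[OF Gder d2]], of k] u assms(5) by simp
      have xu: "0 \<le> x u" using xnn u assms(5) by auto
      have p0: "0 < 1 + ?p" by (simp add: add_pos_nonneg)
      have "-(b0 / (1 + ?p) + d) * x u + k * h (u - r) + k * (h u - h (u - r))
            = x u * ((k - 1) * b0 / (1 + ?p) - d)"
      proof -
        have gen: "\<And>q a X. q > 0 \<Longrightarrow> -(b0 / q + d) * X + k * a + k * (b0 * X / q - a)
            = X * ((k - 1) * b0 / q - d)" by (simp add: field_simps)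
        show ?thesis unfolding h_def by (rule gen[OF p0])
      qed
      also have "\<dots> = x u * (d / (1 + ?p) - d)" using kb by simp
      also have "\<dots> \<le> 0"
      proof -
        have "d / (1 + ?p) \<le> d" using p0 assms(3) by (simp add: divide_le_eq)
        thus ?thesis using xu by (simp add: mult_nonneg_nonpos)
      qed
      finally show "\<exists>y. (V has_real_derivative y) (at u) \<and> y \<le> 0" using dV by blast
    qed
    have cV: "continuous_on {0..t} V"
      unfolding V_def
    proof (intro continuous_intros)
      show "continuous_on {0..t} x" using cx by (rule continuous_on_subset) (use assms(5) in auto)
      show "continuous_on {0..t} G" using cG[of t] by (rule continuous_on_subset) (use assms(5) in auto)
      show "continuous_on {0..t} (\<lambda>u. G (u - r))"
      proof (rule continuous_on_compose2[OF cG[of "t - r"]])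
        show "continuous_on {0..t} (\<lambda>u. u - r)"
          by (rule continuous_on_diff[OF continuous_on_id continuous_on_const])
        show "(\<lambda>u. u - r) ` {0..t} \<subseteq> {-r..t-r}" by auto
      qed
    qed
    have Vt: "V t \<le> V 0"
      using DERIV_nonpos_imp_decreasing_open[of 0 t V] t Vder cV by auto
    have Gt: "0 \<le> G t - G (t - r)"
    proof -
      have "h integrable_on {-r..t}"
        using ch by (intro integrable_continuous_interval) (rule continuous_on_subset, auto)
      then have "integral {-r..t-r} h + integral {t-r..t} h = integral {-r..t} h"
        using t assms(5) by (intro Henstock_Kurzweil_Integration.integral_combine) auto
      moreover have "0 \<le> integral {t-r..t} h"
        using \<open>h integrable_on {-r..t}\<close> t assms(5)
        by (intro integral_nonneg) (auto intro: integrable_subinterval_real hnn)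
      ultimately show ?thesis unfolding G_def by linarith
    qed
    have G0: "G 0 \<le> b0 * S * r"
    proof -
      have hi: "h integrable_on {-r..0}"
        using ch by (intro integrable_continuous_interval) (rule continuous_on_subset, auto)
      have "integral {-r..0} h \<le> integral {-r..0} (\<lambda>_. b0 * S)"
      proof (rule integral_le[OF hi])
        show "(\<lambda>_. b0 * S) integrable_on {-r..0}" by (rule integrable_const_ivl)
        fix s assume s: "s \<in> {-r..0}"
        have "h s \<le> b0 * x s" using hle s by auto
        also have "\<dots> \<le> b0 * S" using xphi phiS s assms(1) by auto
        finally show "h s \<le> b0 * S" .
      qed
      also have "\<dots> = b0 * S * r" using assms(5) by simp
      finally show ?thesis unfolding G_def .
    qed
    have Gm: "G (-r) = 0" unfolding G_def by simp
    have "V 0 \<le> S + k * (b0 * S * r)"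
      unfolding V_def using Gm G0 phiS[of 0] xphi kpos assms(5)
      by (auto intro!: add_mono mult_left_mono)
    also have "\<dots> = S * C" unfolding C_def by (simp add: algebra_simps)
    also have "\<dots> < \<epsilon>" using Sl Cpos unfolding S_def by (simp add: pos_less_divide_eq)
    finally have "V 0 < \<epsilon>" .
    moreover have "x t \<le> V t" unfolding V_def using Gt kpos by simp
    ultimately show "x t < \<epsilon>" using Vt by linarith
    show "0 \<le> x t" using xnn t assms(5) by auto
  qed
qed

end
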